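(* Let $G=(V,E)$ be a complete bipartite graph with $V=V_1\cup V_2$, $V_1\cap V_2=\emptyset$, $V_1,V_2\neq\emptyset$, and $E=\{\{i,j\}: i\in V_1,\ j\in V_2\}$. Let $c\in\mathbb{R}^{|V|}$ have strictly positive components and $\rho>0$. Then there exist strictly positive edge weights such that the weighted adjacency matrix $A$ satisfies $Ac=\rho c$ if and only if $\sum_{j\in V_1}c_j^2=\sum_{j\in V_2}c_j^2$.
   Context: For positive edge weights $w_{ij}=w_{ji}$ ($\{i,j\}\in E$), the weighted adjacency matrix $A$ has $a_{ij}=w_{ij}$ if $\{i,j\}\in E$ and $a_{ij}=0$ otherwise. *)

theory Defs
  imports Main "HOL-Analysis.Analysis"
begin

definition cbip_edges :: "'a set \<Rightarrow> 'a set \<Rightarrow> 'a set set" where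
  "cbip_edges V1 V2 = {{i, j} | i j. i \<in> V1 \<and> j \<in> V2}"

definition pos_edge_weights :: "'a set set \<Rightarrow> ('a \<Rightarrow> 'a \<Rightarrow> real) \<Rightarrow> bool" where
  "pos_edge_weights E w \<longleftrightarrow> (\<forall>i j. {i, j} \<in> E \<longrightarrow> w i j = w j i \<and> w i j > 0)"

definition wadj :: "'a set set \<Rightarrow> ('a \<Rightarrow> 'a \<Rightarrow> real) \<Rightarrow> 'a \<Rightarrow> 'a \<Rightarrow> real" where
  "wadj E w i j = (if {i, j} \<in> E then w i j else 0)"

definition mat_vec :: "'a set \<Rightarrow> ('a \<Rightarrow> 'a \<Rightarrow> real) \<Rightarrow> ('a \<Rightarrow> real) \<Rightarrow> 'a \<Rightarrow> real" where
  "mat_vec V A c i = (\<Sum>j\<in>V. A i j * c j)"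

end

theory Submission
  imports Defs
begin

lemma edge_iff:
  assumes "V1 \<inter> V2 = {}"
  shows "{i, j} \<in> cbip_edges V1 V2 \<longleftrightarrow> (i \<in> V1 \<and> j \<in> V2) \<or> (i \<in> V2 \<and> j \<in> V1)"
  using assms unfolding cbip_edges_def by (auto simp: doubleton_eq_iff)

lemma mv1:
  assumes "finite V1" "finite V2" "V1 \<inter> V2 = {}" "i \<in> V1"
  shows "mat_vec (V1 \<union> V2) (wadj (cbip_edges V1 V2) w) c i = (\<Sum>j\<in>V2. w i j * c j)"
proof -
  have "mat_vec (V1 \<union> V2) (wadj (cbip_edges V1 V2) w) c i
      = (\<Sum>j\<in>V1. wadj (cbip_edges V1 V2) w i j * c j) + (\<Sum>j\<in>V2. wadj (cbip_edges V1 V2) w i j * c j)"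
    unfolding mat_vec_def using assms by (simp add: sum.union_disjoint)
  also have "(\<Sum>j\<in>V1. wadj (cbip_edges V1 V2) w i j * c j) = 0"
    using assms by (intro sum.neutral) (auto simp: wadj_def edge_iff)
  also have "(\<Sum>j\<in>V2. wadj (cbip_edges V1 V2) w i j * c j) = (\<Sum>j\<in>V2. w i j * c j)"
    using assms by (intro sum.cong) (auto simp: wadj_def edge_iff)
  finally show ?thesis by simp
qed

lemma mv2:
  assumes "finite V1" "finite V2" "V1 \<inter> V2 = {}" "i \<in> V2"
  shows "mat_vec (V1 \<union> V2) (wadj (cbip_edges V1 V2) w) c i = (\<Sum>j\<in>V1. w i j * c j)"
proof -
  have "mat_vec (V1 \<union> V2) (wadj (cbip_edges V1 V2) w) c i
      = (\<Sum>j\<in>V1. wadj (cbip_edges V1 V2) w i j * c j) + (\<Sum>j\<in>V2. wadj (cbip_edges V1 V2) w i j * c j)"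
    unfolding mat_vec_def using assms by (simp add: sum.union_disjoint)
  also have "(\<Sum>j\<in>V2. wadj (cbip_edges V1 V2) w i j * c j) = 0"
    using assms by (intro sum.neutral) (auto simp: wadj_def edge_iff)
  also have "(\<Sum>j\<in>V1. wadj (cbip_edges V1 V2) w i j * c j) = (\<Sum>j\<in>V1. w i j * c j)"
    using assms by (intro sum.cong) (auto simp: wadj_def edge_iff)
  finally show ?thesis by simp
qed

theorem mainTheorem3:
  fixes V1 V2 :: "'a set" and c :: "'a \<Rightarrow> real" and \<rho> :: real
  assumes "finite V1" and "finite V2"
    and "V1 \<inter> V2 = {}" and "V1 \<noteq> {}" and "V2 \<noteq> {}"
    and "\<forall>i\<in>V1 \<union> V2. c i > 0"
    and "\<rho> > 0"
  shows "(\<exists>w. pos_edge_weights (cbip_edges V1 V2) w \<and>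
            (\<forall>i\<in>V1 \<union> V2. mat_vec (V1 \<union> V2) (wadj (cbip_edges V1 V2) w) c i = \<rho> * c i))
         \<longleftrightarrow> (\<Sum>j\<in>V1. (c j)^2) = (\<Sum>j\<in>V2. (c j)^2)"
proof
  assume "\<exists>w. pos_edge_weights (cbip_edges V1 V2) w \<and>
            (\<forall>i\<in>V1 \<union> V2. mat_vec (V1 \<union> V2) (wadj (cbip_edges V1 V2) w) c i = \<rho> * c i)"
  then obtain w where pw: "pos_edge_weights (cbip_edges V1 V2) w"
    and ev: "\<forall>i\<in>V1 \<union> V2. mat_vec (V1 \<union> V2) (wadj (cbip_edges V1 V2) w) c i = \<rho> * c i" by blast
  have sym: "w j i = w i j" if "i \<in> V1" "j \<in> V2" for i j
    using pw that assms(3) unfolding pos_edge_weights_def by (metis edge_iff)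
  have "\<rho> * (\<Sum>i\<in>V1. (c i)^2) = (\<Sum>i\<in>V1. c i * (\<rho> * c i))"
    by (simp add: sum_distrib_left power2_eq_square algebra_simps)
  also have "\<dots> = (\<Sum>i\<in>V1. c i * (\<Sum>j\<in>V2. w i j * c j))"
    using ev mv1[OF assms(1-3), of _ w c] by (intro sum.cong) auto
  also have "\<dots> = (\<Sum>i\<in>V1. \<Sum>j\<in>V2. c i * w i j * c j)"
    by (simp add: sum_distrib_left mult.assoc)
  also have "\<dots> = (\<Sum>j\<in>V2. \<Sum>i\<in>V1. c i * w i j * c j)"
    by (rule sum.swap)
  also have "\<dots> = (\<Sum>j\<in>V2. c j * (\<Sum>i\<in>V1. w j i * c i))"
    unfolding sum_distrib_left
  proof (intro sum.cong refl)
    fix j i assume "j \<in> V2" "i \<in> V1"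
    then show "c i * w i j * c j = c j * (w j i * c i)" using sym[of i j] by simp
  qed
  also have "\<dots> = (\<Sum>j\<in>V2. c j * (\<rho> * c j))"
    using ev mv2[OF assms(1-3), of _ w c] by (intro sum.cong) auto
  also have "\<dots> = \<rho> * (\<Sum>i\<in>V2. (c i)^2)"
    by (simp add: sum_distrib_left power2_eq_square algebra_simps)
  finally show "(\<Sum>j\<in>V1. (c j)^2) = (\<Sum>j\<in>V2. (c j)^2)" using assms(7) by simp
next
  assume eq: "(\<Sum>j\<in>V1. (c j)^2) = (\<Sum>j\<in>V2. (c j)^2)"
  define S where "S = (\<Sum>j\<in>V1. (c j)^2)"
  have cp: "\<And>i. i \<in> V1 \<Longrightarrow> (c i)^2 > 0" using assms(6) by (simp add: power2_eq_square)
  have Spos: "S > 0" unfolding S_def using assms(1,4) cp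
    by (intro sum_pos) auto
  define w where "w = (\<lambda>i j. \<rho> * c i * c j / S)"
  have pw: "pos_edge_weights (cbip_edges V1 V2) w"
    unfolding pos_edge_weights_def w_def
  proof (intro allI impI conjI)
    fix i j assume "{i, j} \<in> cbip_edges V1 V2"
    then have "i \<in> V1 \<union> V2" "j \<in> V1 \<union> V2" using edge_iff[OF assms(3)] by auto
    then show "0 < \<rho> * c i * c j / S" using assms(6,7) Spos by simp
  qed (simp add: algebra_simps)
  have "mat_vec (V1 \<union> V2) (wadj (cbip_edges V1 V2) w) c i = \<rho> * c i" if "i \<in> V1 \<union> V2" for i
  proof (cases "i \<in> V1")
    case True
    have "(\<Sum>j\<in>V2. w i j * c j) = \<rho> * c i / S * (\<Sum>j\<in>V2. (c j)^2)"
      unfolding w_def by (simp add: sum_distrib_left power2_eq_square algebra_simps)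
    also have "\<dots> = \<rho> * c i" using eq Spos unfolding S_def by simp
    finally show ?thesis using mv1[OF assms(1-3) True] by simp
  next
    case False
    then have i2: "i \<in> V2" using that by auto
    have "(\<Sum>j\<in>V1. w i j * c j) = \<rho> * c i / S * (\<Sum>j\<in>V1. (c j)^2)"
      unfolding w_def by (simp add: sum_distrib_left power2_eq_square algebra_simps)
    also have "\<dots> = \<rho> * c i" using Spos unfolding S_def by simp
    finally show ?thesis using mv2[OF assms(1-3) i2] by simp
  qed
  with pw show "\<exists>w. pos_edge_weights (cbip_edges V1 V2) w \<and>
            (\<forall>i\<in>V1 \<union> V2. mat_vec (V1 \<union> V2) (wadj (cbip_edges V1 V2) w) c i = \<rho> * c i)" by blast
qed

end
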